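(* Let $\mathbf a,\mathbf b\in\mathbb Z^2$ be arbitrary integral vectors and put $B=|\mathbf a\times\mathbf b|$. Define the integers $$B_0=-B,\quad B_1=B+\|\mathbf a\|^2,\quad B_2=B+\|\mathbf b\|^2,\quad B_{3,4}=B+\|\mathbf a\pm\mathbf b\|^2=B+\|\mathbf a\|^2+\|\mathbf b\|^2\pm2\,\mathbf a\cdot\mathbf b .$$ Then $\mathbf a,\mathbf b$ determine an everted Descartes configuration of disks $D_0,D_1,D_2,D_3$ with curvatures $(B_0,B_1,B_2,B_3)$ (and likewise, the conjugate one with $B_4$ in place of $B_3$), in which $\mathbf a=\mathrm{spin}(D_0,D_1)$ and $\mathbf b=\mathrm{spin}(D_0,D_2)$; consequently the Apollonian packing generated by it is integral. Moreover, for every vector $\mathbf v=\alpha\mathbf a+\beta\mathbf b$ with $\alpha,\beta\in\mathbb Z$, $\gcd(\alpha,\beta)=1$, there is a disk in the major corona (the set of disks of the packing tangent to $D_0$) with curvature $$B_{\mathbf v}=B+\|\mathbf v\|^2 .$$ If $\mathbf v,\mathbf w$ are two such linear combinations with $\mathbf v\times\mathbf w=\pm B$, then the disks of curvatures $B_0,B_{\mathbf v},B_{\mathbf w}$ form a tricycle.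
   Context: A disk is the interior (inner, positive curvature $1/r$) or exterior (outer, negative curvature $-1/r$, signed radius $-r$) of a circle of radius $r$; half-planes have curvature $0$. A tricycle is a configuration of three mutually tangent, non-overlapping disks; a Descartes configuration is four mutually tangent non-overlapping disks; it is everted if it contains a disk of negative (or zero) curvature, that disk being the major disk. Every tricycle is completed uniquely to an Apollonian packing by recursively inscribing new disks in the curvilinear triangular gaps; it is integral if all curvatures are integers. Tangency spinor: identifying the plane with $\mathbb C$, for tangent disks $A,B$ with centers $c_A,c_B$ and signed radii $r_A,r_B$, $\mathrm{spin}(A,B)=\pm\sqrt{(c_B-c_A)/(r_Ar_B)}$, regarded as a vector in $\mathbb R^2$ (defined up to sign). For $\mathbf a=(x,y)^T,\mathbf b=(x',y')^T$: $\mathbf a\cdot\mathbf b=xx'+yy'$, $\mathbf a\times\mathbf b=xy'-x'y$, $\|\mathbf a\|^2=\mathbf a\cdot\mathbf a$. *)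

theory Defs
  imports "HOL-Analysis.Analysis"
begin

text \<open>Circ c r: disk bounded by the circle of centre c and radius |r|, with signed radius r:
  r > 0 is the closed interior, r < 0 the closed exterior (curvature 1/r < 0).\<close>

datatype gdisk = Circ complex real | HPlane complex real

fun wf_disk :: "gdisk \<Rightarrow> bool" where
  "wf_disk (Circ c r) \<longleftrightarrow> r \<noteq> 0"
| "wf_disk (HPlane u t) \<longleftrightarrow> cmod u = 1"

fun disk_set :: "gdisk \<Rightarrow> complex set" where
  "disk_set (Circ c r) = (if r > 0 then cball c r else {z. dist z c \<ge> - r})"
| "disk_set (HPlane u t) = {z. Re (cnj u * z) \<le> t}"

fun curv :: "gdisk \<Rightarrow> real" where
  "curv (Circ c r) = 1 / r"
| "curv (HPlane u t) = 0"

fun is_half :: "gdisk \<Rightarrow> bool" where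
  "is_half (Circ c r) = False"
| "is_half (HPlane u t) = True"

text \<open>Tangent and non-overlapping: interiors disjoint and the disks touch in exactly one point;
  two (necessarily parallel) half-planes with disjoint interiors count as tangent at infinity.\<close>
definition tangent :: "gdisk \<Rightarrow> gdisk \<Rightarrow> bool" where
  "tangent D E \<longleftrightarrow> wf_disk D \<and> wf_disk E \<and>
     interior (disk_set D) \<inter> interior (disk_set E) = {} \<and>
     (if is_half D \<and> is_half E then True else (\<exists>!z. z \<in> disk_set D \<inter> disk_set E))"

definition tricycle :: "gdisk \<Rightarrow> gdisk \<Rightarrow> gdisk \<Rightarrow> bool" where
  "tricycle A B C \<longleftrightarrow> tangent A B \<and> tangent A C \<and> tangent B C"

definition descartes :: "gdisk \<Rightarrow> gdisk \<Rightarrow> gdisk \<Rightarrow> gdisk \<Rightarrow> bool" where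
  "descartes A B C D \<longleftrightarrow> tricycle A B C \<and> tangent A D \<and> tangent B D \<and> tangent C D"

definition everted :: "gdisk \<Rightarrow> gdisk \<Rightarrow> gdisk \<Rightarrow> gdisk \<Rightarrow> bool" where
  "everted A B C D \<longleftrightarrow> descartes A B C D \<and>
     (curv A \<le> 0 \<or> curv B \<le> 0 \<or> curv C \<le> 0 \<or> curv D \<le> 0)"

fun is_spin :: "gdisk \<Rightarrow> gdisk \<Rightarrow> complex \<Rightarrow> bool" where
  "is_spin (Circ c1 r1) (Circ c2 r2) s \<longleftrightarrow> s\<^sup>2 = (c2 - c1) / complex_of_real (r1 * r2)"
| "is_spin _ _ _ \<longleftrightarrow> False"

text \<open>Descartes configurations reachable from q by (reordering and) replacing one disk by the
  other disk completing the remaining tricycle, i.e. inscribing disks into the gaps.\<close>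
inductive_set apoll_configs ::
  "gdisk \<times> gdisk \<times> gdisk \<times> gdisk \<Rightarrow> (gdisk \<times> gdisk \<times> gdisk \<times> gdisk) set" for q where
  start: "q \<in> apoll_configs q"
| swap: "(A, B, C, D) \<in> apoll_configs q \<Longrightarrow> (B, A, C, D) \<in> apoll_configs q"
| rot: "(A, B, C, D) \<in> apoll_configs q \<Longrightarrow> (B, C, D, A) \<in> apoll_configs q"
| flip: "(A, B, C, D) \<in> apoll_configs q \<Longrightarrow> descartes A B C E \<Longrightarrow> E \<noteq> D
          \<Longrightarrow> (A, B, C, E) \<in> apoll_configs q"

definition apollonian_packing :: "gdisk \<times> gdisk \<times> gdisk \<times> gdisk \<Rightarrow> gdisk set" where
  "apollonian_packing q = {X. \<exists>A B C D. (A, B, C, D) \<in> apoll_configs q \<and> X \<in> {A, B, C, D}}"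

definition integral_packing :: "gdisk set \<Rightarrow> bool" where
  "integral_packing P \<longleftrightarrow> (\<forall>X\<in>P. curv X \<in> \<int>)"

fun vcross :: "int \<times> int \<Rightarrow> int \<times> int \<Rightarrow> int" where
  "vcross (x, y) (x', y') = x * y' - x' * y"

fun vdot :: "int \<times> int \<Rightarrow> int \<times> int \<Rightarrow> int" where
  "vdot (x, y) (x', y') = x * x' + y * y'"

definition vnorm2 :: "int \<times> int \<Rightarrow> int" where
  "vnorm2 v = vdot v v"

fun vlin :: "int \<Rightarrow> int \<Rightarrow> int \<times> int \<Rightarrow> int \<times> int \<Rightarrow> int \<times> int" where
  "vlin \<alpha> \<beta> (x, y) (x', y') = (\<alpha> * x + \<beta> * x', \<alpha> * y + \<beta> * y')"

fun vcomplex :: "int \<times> int \<Rightarrow> complex" where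
  "vcomplex (x, y) = Complex (of_int x) (of_int y)"

end

theory Submission
  imports Defs
begin


lemma int_ball: "ball c r \<subseteq> interior (disk_set (Circ c r))" if "r > 0"
  using that by (simp add: interior_cball)

lemma int_ext: "r < 0 \<Longrightarrow> {z. - r < dist z c} \<subseteq> interior (disk_set (Circ c r))"
proof -
  assume r: "r < 0"
  have e: "{z. - r < dist z c} = - cball c (-r)" by (auto simp: dist_commute)
  have d: "disk_set (Circ c r) = {z. dist z c \<ge> -r}" using r by simp
  show ?thesis unfolding d by (rule interior_maximal) (auto simp: e dist_commute)
qed

lemma int_half: "{z. Re (cnj u * z) < t} \<subseteq> interior (disk_set (HPlane u t))"
proof -
  have "open {z. Re (cnj u * z) < t}"
    by (rule open_Collect_less) (intro continuous_intros)+
  then show ?thesis by (simp only: disk_set.simps) (rule interior_maximal, auto)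
qed

lemma re_cnj_bound: "cmod u = 1 \<Longrightarrow> \<bar>Re (cnj u * w)\<bar> \<le> cmod w"
  by (metis abs_Re_le_cmod complex_mod_cnj mult_1 norm_mult)

lemma re_cnj_self: "cmod u = 1 \<Longrightarrow> Re (cnj u * u) = 1"
  by (metis Re_complex_of_real complex_norm_square mult.commute one_power2)

lemma cc_pos:
  fixes c c' z :: complex
  assumes r: "r > 0" "r' > 0" and disj: "ball c r \<inter> ball c' r' = {}"
    and z: "dist z c \<le> r" "dist z c' \<le> r'"
  shows "dist c c' = r + r'"
proof -
  have "dist c c' \<le> dist c z + dist z c'" by (rule dist_triangle)
  then have le: "dist c c' \<le> r + r'" using z by (simp add: dist_commute)
  have "\<not> dist c c' < r + r'"
  proof
    assume h: "dist c c' < r + r'"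
    define p where "p = c + (r/(r+r')) *\<^sub>R (c' - c)"
    have "p - c = (r/(r+r')) *\<^sub>R (c' - c)" by (simp add: p_def)
    then have d1: "dist p c = r/(r+r') * dist c c'"
      using r by (simp add: dist_norm norm_minus_commute)
    have "p - c' = (r'/(r+r')) *\<^sub>R (c - c')"
    proof -
      have "p - c' = (1 - r/(r+r')) *\<^sub>R (c - c')" by (simp add: p_def algebra_simps)
      also have "1 - r/(r+r') = r'/(r+r')" using r by (simp add: field_simps)
      finally show ?thesis .
    qed
    then have d2: "dist p c' = r'/(r+r') * dist c c'"
      using r by (simp add: dist_norm)
    have "r * dist c c' < r*(r+r')" using mult_strict_left_mono[OF h r(1)] .
    then have "r/(r+r') * dist c c' < r" using r by (simp add: field_simps)
    moreover have "r' * dist c c' < r'*(r+r')" using mult_strict_left_mono[OF h r(2)] .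
    then have "r'/(r+r') * dist c c' < r'" using r by (simp add: field_simps)
    ultimately have "p \<in> ball c r \<inter> ball c' r'" using d1 d2 by (simp add: dist_commute)
    then show False using disj by auto
  qed
  then show ?thesis using le by linarith
qed

lemma unit_dir:
  fixes w :: complex
  obtains e where "cmod e = 1" "w = cmod w *\<^sub>R e"
proof (cases "w = 0")
  case True then show ?thesis using that[of 1] by simp
next
  case False
  then show ?thesis using that[of "(1 / cmod w) *\<^sub>R w"] by (simp add: norm_divide)
qed

lemma cc_mixed:
  fixes c c' z :: complex
  assumes r: "r > 0" "R > 0" and disj: "ball c r \<inter> {z. R < dist z c'} = {}"
    and z: "dist z c \<le> r" "dist z c' \<ge> R"
  shows "dist c c' = R - r"
proof -
  have "dist z c' \<le> dist z c + dist c c'" by (rule dist_triangle)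
  then have le: "R - r \<le> dist c c'" using z by linarith
  have "\<not> dist c c' + r > R"
  proof
    assume h: "dist c c' + r > R"
    obtain e where e: "cmod e = 1" "c - c' = cmod (c - c') *\<^sub>R e" by (rule unit_dir)
    define \<rho> where "\<rho> = (r + max 0 (R - dist c c')) / 2"
    define p where "p = c + \<rho> *\<^sub>R e"
    have rho: "0 \<le> \<rho>" "\<rho> < r" "dist c c' + \<rho> > R" using h r by (auto simp: \<rho>_def max_def field_simps)
    have "p - c' = (dist c c' + \<rho>) *\<^sub>R e"
      using e(2) by (simp add: p_def dist_norm algebra_simps)
    then have d2: "dist p c' = dist c c' + \<rho>" using e(1) rho by (simp add: dist_norm)
    have d1: "dist p c = \<rho>" using e(1) rho by (simp add: p_def dist_norm)
    have "p \<in> ball c r \<inter> {z. R < dist z c'}" using d1 d2 rho by (simp add: dist_commute)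
    then show False using disj by auto
  qed
  then show ?thesis using le by linarith
qed

lemma cc_negneg:
  fixes c c' :: complex
  assumes "{z. R < dist z c} \<inter> {z. R' < dist z c'} = {}" "R \<ge> 0" "R' \<ge> 0"
  shows False
proof -
  define p where "p = c + (R + R' + dist c c' + 1) *\<^sub>R 1"
  have d1: "dist p c = R + R' + dist c c' + 1" using assms by (simp add: p_def dist_norm)
  have "dist p c \<le> dist p c' + dist c' c" by (rule dist_triangle)
  then have "dist p c' > R'" using d1 assms by (simp add: dist_commute)
  moreover have "R < dist p c" using d1 assms zero_le_dist[of c c'] by linarith
  ultimately have "p \<in> {z. R < dist z c} \<inter> {z. R' < dist z c'}" by simp
  then show False using assms(1) by blast
qed

lemma ch_pos:
  fixes c u z :: complex
  assumes r: "r > 0" "cmod u = 1" and disj: "ball c r \<inter> {z. Re (cnj u * z) < t} = {}"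
    and z: "dist z c \<le> r" "Re (cnj u * z) \<le> t"
  shows "Re (cnj u * c) = t + r"
proof -
  have "Re (cnj u * c) = Re (cnj u * z) + Re (cnj u * (c - z))" by (simp add: algebra_simps)
  moreover have "Re (cnj u * (c - z)) \<le> r"
    using re_cnj_bound[OF r(2), of "c - z"] z by (simp add: dist_norm norm_minus_commute)
  ultimately have le: "Re (cnj u * c) \<le> t + r" using z by linarith
  have "\<not> Re (cnj u * c) < t + r"
  proof
    assume h: "Re (cnj u * c) < t + r"
    define \<rho> where "\<rho> = (r + max 0 (Re (cnj u * c) - t)) / 2"
    define p where "p = c - \<rho> *\<^sub>R u"
    have rho: "0 \<le> \<rho>" "\<rho> < r" "Re (cnj u * c) - \<rho> < t" using h r by (auto simp: \<rho>_def max_def field_simps)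
    have d1: "dist p c = \<rho>" using r rho by (simp add: p_def dist_norm)
    have "Re (cnj u * p) = Re (cnj u * c) - \<rho> * Re (cnj u * u)"
      by (simp add: p_def algebra_simps scaleR_conv_of_real)
    then have "Re (cnj u * p) < t" using re_cnj_self[OF r(2)] rho by simp
    then have "p \<in> ball c r \<inter> {z. Re (cnj u * z) < t}" using d1 rho by (simp add: dist_commute)
    then show False using disj by auto
  qed
  then show ?thesis using le by linarith
qed

lemma ch_neg:
  fixes c u :: complex
  assumes "cmod u = 1" "{z. R < dist z c} \<inter> {z. Re (cnj u * z) < t} = {}" "R \<ge> 0"
  shows False
proof -
  define M where "M = R + \<bar>Re (cnj u * c) - t\<bar> + 1"
  define p where "p = c - M *\<^sub>R u"
  have d1: "dist p c = M" using assms by (simp add: p_def dist_norm M_def)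
  have "Re (cnj u * p) = Re (cnj u * c) - M * Re (cnj u * u)"
    by (simp add: p_def algebra_simps scaleR_conv_of_real)
  then have "Re (cnj u * p) = Re (cnj u * c) - M" using re_cnj_self[OF assms(1)] by simp
  moreover have "Re (cnj u * c) - M < t"
    unfolding M_def using assms(3) abs_ge_self[of "Re (cnj u * c) - t"] by linarith
  ultimately have "Re (cnj u * p) < t" by simp
  moreover have "R < dist p c" using d1 unfolding M_def by linarith
  ultimately have "p \<in> {z. R < dist z c} \<inter> {z. Re (cnj u * z) < t}" by simp
  then show False using assms(2) by blast
qed

lemma hh:
  fixes u u' :: complex
  assumes "cmod u = 1" "cmod u' = 1" "{z. Re (cnj u * z) < t} \<inter> {z. Re (cnj u' * z) < t'} = {}"
  shows "Re u * Re u' + Im u * Im u' = -1"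
proof -
  let ?s = "Re u * Re u' + Im u * Im u'"
  have n: "(Re u)\<^sup>2 + (Im u)\<^sup>2 = 1" "(Re u')\<^sup>2 + (Im u')\<^sup>2 = 1"
    using assms(1,2) by (simp_all add: cmod_power2[symmetric])
  have "0 \<le> (Re u + Re u')\<^sup>2 + (Im u + Im u')\<^sup>2" by simp
  then have ge: "?s \<ge> -1" using n by (simp add: power2_eq_square algebra_simps)
  have "\<not> ?s > -1"
  proof
    assume h: "?s > -1"
    define M where "M = (\<bar>t\<bar> + \<bar>t'\<bar> + 1) / (1 + ?s)"
    define p where "p = - M *\<^sub>R (u + u')"
    have M: "M * (1 + ?s) = \<bar>t\<bar> + \<bar>t'\<bar> + 1" using h by (simp add: M_def)
    have "Re (cnj u * p) = - M * (1 + ?s)"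
      using n by (simp add: p_def algebra_simps power2_eq_square)
    moreover have "Re (cnj u' * p) = - M * (1 + ?s)"
      using n by (simp add: p_def algebra_simps power2_eq_square)
    ultimately have "p \<in> {z. Re (cnj u * z) < t} \<inter> {z. Re (cnj u' * z) < t'}" using M by auto
    then show False using assms by auto
  qed
  then show ?thesis using ge by linarith
qed

type_synonym v4 = "real \<times> real \<times> real \<times> real"

definition lor :: "v4 \<Rightarrow> v4 \<Rightarrow> real" where
  "lor v w = - (fst v * fst (snd w) + fst (snd v) * fst w) / 2
     + fst (snd (snd v)) * fst (snd (snd w)) + snd (snd (snd v)) * snd (snd (snd w))"

fun L :: "gdisk \<Rightarrow> v4" where
  "L (Circ c r) = (((Re c)\<^sup>2 + (Im c)\<^sup>2 - r\<^sup>2) / r, 1 / r, Re c / r, Im c / r)"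
| "L (HPlane u t) = (- 2 * t, 0, - Re u, - Im u)"

lemma lor_sym: "lor v w = lor w v"
  by (simp add: lor_def algebra_simps)

lemma tangent_sym: "tangent D E = tangent E D"
  unfolding tangent_def by (auto simp: Int_commute)

lemma curv_L: "curv D = fst (snd (L D))"
  by (cases D) auto

lemma lor_self: "wf_disk D \<Longrightarrow> lor (L D) (L D) = 1"
proof (cases D)
  case (Circ c r)
  assume "wf_disk D"
  then have r: "r \<noteq> 0" using Circ by simp
  show ?thesis using r unfolding Circ
    by (simp add: lor_def field_simps power2_eq_square)
next
  case (HPlane u t)
  assume "wf_disk D"
  then have "(Re u)\<^sup>2 + (Im u)\<^sup>2 = 1" using HPlane by (simp add: cmod_power2[symmetric])
  then show ?thesis unfolding HPlane by (simp add: lor_def power2_eq_square)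
qed

lemma L_inj: "wf_disk D \<Longrightarrow> wf_disk E \<Longrightarrow> L D = L E \<Longrightarrow> D = E"
  by (cases D; cases E) (auto simp: complex_eq_iff)

lemma lor_cc:
  assumes "r \<noteq> 0" "r' \<noteq> 0" "(dist c c')\<^sup>2 = (r + r')\<^sup>2"
  shows "lor (L (Circ c r)) (L (Circ c' r')) = -1"
proof -
  have "(dist c c')\<^sup>2 = (Re c - Re c')\<^sup>2 + (Im c - Im c')\<^sup>2"
    by (simp add: dist_norm cmod_power2)
  then have e: "(Re c - Re c')\<^sup>2 + (Im c - Im c')\<^sup>2 = (r + r')\<^sup>2" using assms by simp
  have "lor (L (Circ c r)) (L (Circ c' r')) =
      (r\<^sup>2 + r'\<^sup>2 - ((Re c - Re c')\<^sup>2 + (Im c - Im c')\<^sup>2)) / (2 * r * r')"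
    using assms(1,2) by (simp add: lor_def field_simps power2_eq_square)
  also have "\<dots> = -1" using assms(1,2) unfolding e by (simp add: field_simps power2_eq_square)
  finally show ?thesis .
qed

lemma lor_tan_CC:
  assumes "tangent (Circ c r) (Circ c' r')"
  shows "lor (L (Circ c r)) (L (Circ c' r')) = -1"
proof -
  have r: "r \<noteq> 0" "r' \<noteq> 0" using assms by (auto simp: tangent_def)
  have disj: "interior (disk_set (Circ c r)) \<inter> interior (disk_set (Circ c' r')) = {}"
    using assms by (simp add: tangent_def)
  obtain z where z: "z \<in> disk_set (Circ c r)" "z \<in> disk_set (Circ c' r')"
    using assms unfolding tangent_def by auto
  have "(dist c c')\<^sup>2 = (r + r')\<^sup>2"
  proof (cases "r > 0")
    case rp: True
    show ?thesis
    proof (cases "r' > 0")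
      case True
      have "ball c r \<inter> ball c' r' = {}" using disj int_ball[OF rp] int_ball[OF True, of c'] by blast
      then show ?thesis using cc_pos[OF rp True, of c c' z] z rp True by (simp add: dist_commute)
    next
      case False
      then have rn: "r' < 0" using r by simp
      have "ball c r \<inter> {z. - r' < dist z c'} = {}" using disj int_ball[OF rp] int_ext[OF rn, of c'] by blast
      then have "dist c c' = - r' - r" using cc_mixed[OF rp, of "-r'" c c' z] z rp rn by (simp add: dist_commute)
      then have "dist c c' = - (r + r')" by simp
      then show ?thesis by (metis power2_minus)
    qed
  next
    case False
    then have rn: "r < 0" using r by simp
    show ?thesis
    proof (cases "r' > 0")
      case True
      have "ball c' r' \<inter> {z. - r < dist z c} = {}" using disj int_ball[OF True, of c'] int_ext[OF rn, of c] by blast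
      then have "dist c' c = - r - r'" using cc_mixed[OF True, of "-r" c' c z] z True rn by (simp add: dist_commute)
      then have "dist c c' = - (r + r')" by (simp add: dist_commute)
      then show ?thesis by (metis power2_minus)
    next
      case False
      then have rn': "r' < 0" using r by simp
      have "{z. - r < dist z c} \<inter> {z. - r' < dist z c'} = {}" using disj int_ext[OF rn, of c] int_ext[OF rn', of c'] by blast
      then show ?thesis using cc_negneg[of "-r" c "-r'" c'] rn rn' by simp
    qed
  qed
  then show ?thesis using lor_cc r by blast
qed

lemma lor_tan_CH:
  assumes "tangent (Circ c r) (HPlane u t)"
  shows "lor (L (Circ c r)) (L (HPlane u t)) = -1"
proof -
  have r: "r \<noteq> 0" "cmod u = 1" using assms by (auto simp: tangent_def)
  have disj: "interior (disk_set (Circ c r)) \<inter> interior (disk_set (HPlane u t)) = {}"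
    using assms by (simp add: tangent_def)
  obtain z where z: "z \<in> disk_set (Circ c r)" "z \<in> disk_set (HPlane u t)"
    using assms unfolding tangent_def by auto
  show ?thesis
  proof (cases "r > 0")
    case True
    have "ball c r \<inter> {z. Re (cnj u * z) < t} = {}" using disj int_ball[OF True] int_half[of u t] by blast
    then have "Re (cnj u * c) = t + r" using ch_pos[OF True r(2), of c t z] z True by (simp add: dist_commute)
    moreover have "lor (L (Circ c r)) (L (HPlane u t)) = (t - Re (cnj u * c)) / r"
      using r by (simp add: lor_def field_simps)
    ultimately show ?thesis using r by simp
  next
    case False
    then have rn: "r < 0" using r by simp
    have "{z. - r < dist z c} \<inter> {z. Re (cnj u * z) < t} = {}" using disj int_ext[OF rn, of c] int_half[of u t] by blast
    then show ?thesis using ch_neg[OF r(2), of "-r" c t] rn by simp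
  qed
qed

lemma lor_tan_HH:
  assumes "tangent (HPlane u t) (HPlane u' t')"
  shows "lor (L (HPlane u t)) (L (HPlane u' t')) = -1"
proof -
  have r: "cmod u = 1" "cmod u' = 1" using assms by (auto simp: tangent_def)
  have disj: "interior (disk_set (HPlane u t)) \<inter> interior (disk_set (HPlane u' t')) = {}"
    using assms by (simp add: tangent_def)
  have "{z. Re (cnj u * z) < t} \<inter> {z. Re (cnj u' * z) < t'} = {}" using disj int_half[of u t] int_half[of u' t'] by blast
  then show ?thesis using hh[OF r] by (simp add: lor_def)
qed

lemma lor_tangent: "tangent D E \<Longrightarrow> lor (L D) (L E) = -1"
proof (cases D; cases E)
  fix c r c' r' assume "D = Circ c r" "E = Circ c' r'" "tangent D E"
  then show ?thesis using lor_tan_CC by simp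
next
  fix c r u t assume "D = Circ c r" "E = HPlane u t" "tangent D E"
  then show ?thesis using lor_tan_CH by simp
next
  fix c r u t assume "E = Circ c r" "D = HPlane u t" "tangent D E"
  then show ?thesis using lor_tan_CH[of c r u t] lor_sym tangent_sym by metis
next
  fix u t u' t' assume "D = HPlane u t" "E = HPlane u' t'" "tangent D E"
  then show ?thesis using lor_tan_HH by simp
qed



lemma lor_add [simp]: "lor (v + w) z = lor v z + lor w z"
  by (simp add: lor_def field_simps)
lemma lor_diff [simp]: "lor (v - w) z = lor v z - lor w z"
  by (simp add: lor_def field_simps)
lemma lor_scale [simp]: "lor (k *\<^sub>R v) z = k * lor v z"
  by (simp add: lor_def field_simps)
lemma lor_zero [simp]: "lor 0 z = 0"
  by (simp add: lor_def)

lemma four_other: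
  fixes a b c d e :: v4
  assumes aa: "lor a a = 1" and bb: "lor b b = 1" and cc: "lor c c = 1" and dd: "lor d d = 1"
    and ab: "lor a b = -1" and ac: "lor a c = -1" and ad: "lor a d = -1"
    and bc: "lor b c = -1" and bd: "lor b d = -1" and cd: "lor c d = -1"
    and ee: "lor e e = 1" and ea: "lor e a = -1" and eb: "lor e b = -1" and ec: "lor e c = -1"
    and ne: "e \<noteq> d"
  shows "e = 2 *\<^sub>R (a + b + c) - d"
proof -
  have sym: "lor b a = -1" "lor c a = -1" "lor d a = -1" "lor c b = -1" "lor d b = -1" "lor d c = -1"
    using ab ac ad bc bd cd lor_sym by metis+
  have dist: "a \<noteq> b" "a \<noteq> c" "a \<noteq> d" "b \<noteq> c" "b \<noteq> d" "c \<noteq> d"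
    using aa ab ac ad bb bc bd cc cd by auto
  have ind: "independent {a, b, c, d}"
    unfolding independent_explicit
  proof (intro conjI allI impI ballI)
    show "finite {a, b, c, d}" by simp
    fix f assume h: "(\<Sum>v\<in>{a, b, c, d}. f v *\<^sub>R v) = 0"
    have s: "f a *\<^sub>R a + f b *\<^sub>R b + f c *\<^sub>R c + f d *\<^sub>R d = 0"
      using h dist by (simp add: add.assoc)
    have e1: "lor (f a *\<^sub>R a + f b *\<^sub>R b + f c *\<^sub>R c + f d *\<^sub>R d) a = 0" using s by simp
    have e2: "lor (f a *\<^sub>R a + f b *\<^sub>R b + f c *\<^sub>R c + f d *\<^sub>R d) b = 0" using s by simp
    have e3: "lor (f a *\<^sub>R a + f b *\<^sub>R b + f c *\<^sub>R c + f d *\<^sub>R d) c = 0" using s by simp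
    have e4: "lor (f a *\<^sub>R a + f b *\<^sub>R b + f c *\<^sub>R c + f d *\<^sub>R d) d = 0" using s by simp
    have "f a = 0 \<and> f b = 0 \<and> f c = 0 \<and> f d = 0"
      using e1 e2 e3 e4 by (simp add: aa bb cc dd ab ac ad bc bd cd sym)
    then show "\<And>v. v \<in> {a, b, c, d} \<Longrightarrow> f v = 0" by auto
  qed
  have card: "card {a, b, c, d} = 4" using dist by simp
  have "UNIV \<subseteq> span {a, b, c, d}"
    by (rule card_ge_dim_independent[OF _ ind]) (simp_all add: card dim_UNIV)
  then have "e \<in> span {a, b, c, d}" by auto
  then obtain k1 k2 k3 k4 where "e - k1 *\<^sub>R a - k2 *\<^sub>R b - k3 *\<^sub>R c - k4 *\<^sub>R d \<in> span {}"
    unfolding span_breakdown_eq by (auto simp: diff_diff_eq)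
  then have ee': "e = k1 *\<^sub>R a + k2 *\<^sub>R b + k3 *\<^sub>R c + k4 *\<^sub>R d" by (simp add: algebra_simps)
  have "lor (k1 *\<^sub>R a + k2 *\<^sub>R b + k3 *\<^sub>R c + k4 *\<^sub>R d) a = -1" using ea ee' by simp
  then have q1: "k1 - k2 - k3 - k4 = -1" by (simp add: aa sym)
  have "lor (k1 *\<^sub>R a + k2 *\<^sub>R b + k3 *\<^sub>R c + k4 *\<^sub>R d) b = -1" using eb ee' by simp
  then have q2: "- k1 + k2 - k3 - k4 = -1" by (simp add: bb ab sym)
  have "lor (k1 *\<^sub>R a + k2 *\<^sub>R b + k3 *\<^sub>R c + k4 *\<^sub>R d) c = -1" using ec ee' by simp
  then have q3: "- k1 - k2 + k3 - k4 = -1" by (simp add: cc ac bc sym)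
  have ed: "lor e d = - k1 - k2 - k3 + k4" using ee' by (simp add: dd ad bd cd)
  have "lor (k1 *\<^sub>R a + k2 *\<^sub>R b + k3 *\<^sub>R c + k4 *\<^sub>R d) e = 1" using ee ee' by simp
  then have "k1 * lor a e + k2 * lor b e + k3 * lor c e + k4 * lor d e = 1" by simp
  moreover have "lor a e = -1" "lor b e = -1" "lor c e = -1" "lor d e = - k1 - k2 - k3 + k4"
    using ea eb ec ed lor_sym by metis+
  ultimately have q5: "- k1 - k2 - k3 + k4 * (- k1 - k2 - k3 + k4) = 1" by simp
  have k: "k2 = k1" "k3 = k1" "k4 = 1 - k1" using q1 q2 q3 by linarith+
  have h: "- k1 - k1 - k1 + (1 - k1) * (- k1 - k1 - k1 + (1 - k1)) = 1" using q5 unfolding k .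
  have "k1 * (k1 - 2) = 0" using h by algebra
  then have "k1 = 0 \<or> k1 = 2" by auto
  moreover have "k1 \<noteq> 0"
  proof
    assume "k1 = 0" then have "e = d" using ee' k by simp
    then show False using ne by simp
  qed
  ultimately have "k1 = 2" by simp
  then show ?thesis using ee' k by (simp add: algebra_simps)
qed

lemma descartes_sym:
  "descartes A B C D \<Longrightarrow> descartes B A C D"
  "descartes A B C D \<Longrightarrow> descartes B C D A"
  unfolding descartes_def tricycle_def using tangent_sym by blast+

lemma tangent_wf: "tangent D E \<Longrightarrow> wf_disk D \<and> wf_disk E"
  by (simp add: tangent_def)

lemma desc_flip:
  assumes "descartes A B C D" "descartes A B C E" "E \<noteq> D"
  shows "curv E = 2 * (curv A + curv B + curv C) - curv D"
proof -
  have t: "tangent A B" "tangent A C" "tangent A D" "tangent B C" "tangent B D" "tangent C D"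
    "tangent A E" "tangent B E" "tangent C E"
    using assms unfolding descartes_def tricycle_def by auto
  have w: "wf_disk A" "wf_disk B" "wf_disk C" "wf_disk D" "wf_disk E"
    using t tangent_wf by blast+
  have ne: "L E \<noteq> L D" using L_inj w assms(3) by blast
  have "L E = 2 *\<^sub>R (L A + L B + L C) - L D"
    apply (rule four_other)
    using t w ne lor_self lor_tangent lor_sym by metis+
  then show ?thesis unfolding curv_L by simp
qed



definition inv4 :: "gdisk \<times> gdisk \<times> gdisk \<times> gdisk \<Rightarrow> bool" where
  "inv4 X = (case X of (A, B, C, D) \<Rightarrow> descartes A B C D \<and>
      curv A \<in> \<int> \<and> curv B \<in> \<int> \<and> curv C \<in> \<int> \<and> curv D \<in> \<int>)"

lemma configs_inv: "X \<in> apoll_configs q \<Longrightarrow> inv4 q \<Longrightarrow> inv4 X"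
proof (induction rule: apoll_configs.induct)
  case start then show ?case .
next
  case (swap A B C D)
  then have "descartes A B C D" "curv A \<in> \<int>" "curv B \<in> \<int>" "curv C \<in> \<int>" "curv D \<in> \<int>"
    by (simp_all add: inv4_def)
  then show ?case using descartes_sym(1)[of A B C D] by (simp add: inv4_def)
next
  case (rot A B C D)
  then have "descartes A B C D" "curv A \<in> \<int>" "curv B \<in> \<int>" "curv C \<in> \<int>" "curv D \<in> \<int>"
    by (simp_all add: inv4_def)
  then show ?case using descartes_sym(2)[of A B C D] by (simp add: inv4_def)
next
  case (flip A B C D E)
  then have "descartes A B C D" "curv A \<in> \<int>" "curv B \<in> \<int>" "curv C \<in> \<int>" "curv D \<in> \<int>"
    by (simp_all add: inv4_def)
  moreover have "curv E = 2 * (curv A + curv B + curv C) - curv D"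
    using desc_flip[OF calculation(1) flip.hyps(2,3)] .
  ultimately show ?case using flip.hyps by (simp add: inv4_def)
qed

lemma integral_from_inv: "inv4 q \<Longrightarrow> integral_packing (apollonian_packing q)"
  unfolding integral_packing_def apollonian_packing_def
proof (intro ballI)
  fix X assume q: "inv4 q" and "X \<in> {X. \<exists>A B C D. (A, B, C, D) \<in> apoll_configs q \<and> X \<in> {A, B, C, D}}"
  then obtain A B C D where abcd: "(A, B, C, D) \<in> apoll_configs q" "X \<in> {A, B, C, D}" by auto
  have "inv4 (A, B, C, D)" using configs_inv[OF abcd(1) q] .
  then have "curv A \<in> \<int> \<and> curv B \<in> \<int> \<and> curv C \<in> \<int> \<and> curv D \<in> \<int>" by (simp add: inv4_def)
  then show "curv X \<in> \<int>" using abcd(2) by blast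
qed

lemma tan_ext:
  fixes c c' :: complex
  assumes r: "r > 0" "r' > 0" and d: "dist c c' = r + r'"
  shows "tangent (Circ c r) (Circ c' r')"
proof -
  have disj: "ball c r \<inter> ball c' r' = {}"
  proof (rule ccontr)
    assume "ball c r \<inter> ball c' r' \<noteq> {}"
    then obtain z where "dist c z < r" "dist c' z < r'" by auto
    moreover have "dist c c' \<le> dist c z + dist z c'" by (rule dist_triangle)
    ultimately show False using d by (simp add: dist_commute)
  qed
  define z0 where "z0 = c + (r/(r+r')) *\<^sub>R (c' - c)"
  have "z0 - c = (r/(r+r')) *\<^sub>R (c' - c)" by (simp add: z0_def)
  then have d1: "dist z0 c = r" using r d by (simp add: dist_norm norm_minus_commute)
  have "z0 - c' = (1 - r/(r+r')) *\<^sub>R (c - c')" by (simp add: z0_def algebra_simps)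
  also have "1 - r/(r+r') = r'/(r+r')" using r by (simp add: field_simps)
  finally have d2: "dist z0 c' = r'" using r d by (simp add: dist_norm)
  have uniq: "y = z0" if y: "dist y c \<le> r" "dist y c' \<le> r'" for y
  proof -
    have "dist c c' \<le> dist c y + dist y c'" by (rule dist_triangle)
    then have e1: "dist c y = r" "dist y c' = r'" "dist c c' = dist c y + dist y c'"
      using y d by (auto simp: dist_commute)
    have "norm (c - y) *\<^sub>R (y - c') = norm (y - c') *\<^sub>R (c - y)"
      using e1(3) dist_triangle_eq by blast
    then have "r *\<^sub>R (y - c') = r' *\<^sub>R (c - y)" using e1 by (simp add: dist_norm)
    then have "(r + r') *\<^sub>R y = r' *\<^sub>R c + r *\<^sub>R c'" by (simp add: algebra_simps)
    moreover have "(r + r') *\<^sub>R z0 = r' *\<^sub>R c + r *\<^sub>R c'"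
    proof -
      have k: "(r + r') * (r/(r+r')) = r" using r by simp
      have "(r + r') *\<^sub>R ((r/(r+r')) *\<^sub>R (c' - c)) = r *\<^sub>R (c' - c)"
        by (simp only: scaleR_scaleR k)
      then show ?thesis by (simp add: z0_def scaleR_add_right algebra_simps)
    qed
    ultimately have "(r + r') *\<^sub>R y = (r + r') *\<^sub>R z0" by simp
    then show ?thesis using r by simp
  qed
  have ex: "\<exists>!z. z \<in> disk_set (Circ c r) \<inter> disk_set (Circ c' r')"
  proof (rule ex1I[of _ z0])
    have "z0 \<in> disk_set (Circ c r)" using d1 r by (simp add: dist_commute)
    moreover have "z0 \<in> disk_set (Circ c' r')" using d2 r by (simp add: dist_commute)
    ultimately show "z0 \<in> disk_set (Circ c r) \<inter> disk_set (Circ c' r')" by simp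
    fix y assume "y \<in> disk_set (Circ c r) \<inter> disk_set (Circ c' r')"
    then show "y = z0" using r by (intro uniq) (auto simp: dist_commute)
  qed
  have i: "interior (disk_set (Circ c r)) \<inter> interior (disk_set (Circ c' r')) = {}"
    using disj r by (simp add: interior_cball)
  have w: "wf_disk (Circ c r)" "wf_disk (Circ c' r')" using r by simp_all
  have nh: "\<not> (is_half (Circ c r) \<and> is_half (Circ c' r'))" by simp
  show ?thesis unfolding tangent_def if_not_P[OF nh] by (intro conjI w(1) w(2) i ex)
qed

lemma tan_int:
  fixes c c' :: complex
  assumes r: "r > 0" "r < R" and d: "dist c c' = R - r"
  shows "tangent (Circ c r) (Circ c' (- R))"
proof -
  have ds: "disk_set (Circ c' (- R)) = {z. dist z c' \<ge> R}" using r by simp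
  have disj: "ball c r \<inter> disk_set (Circ c' (- R)) = {}"
  proof (rule ccontr)
    assume "ball c r \<inter> disk_set (Circ c' (- R)) \<noteq> {}"
    then obtain z where "dist c z < r" "dist z c' \<ge> R" using ds by auto
    moreover have "dist z c' \<le> dist z c + dist c c'" by (rule dist_triangle)
    ultimately show False using d by (simp add: dist_commute)
  qed
  have disj2: "interior (disk_set (Circ c r)) \<inter> interior (disk_set (Circ c' (- R))) = {}"
    using disj interior_subset[of "disk_set (Circ c' (- R))"] r by (auto simp: interior_cball)
  define z0 where "z0 = c + (r/(R-r)) *\<^sub>R (c - c')"
  have d1: "dist z0 c = r" using r d by (simp add: z0_def dist_norm)
  have "z0 - c' = (1 + r/(R-r)) *\<^sub>R (c - c')" by (simp add: z0_def algebra_simps)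
  also have "1 + r/(R-r) = R/(R-r)" using r by (simp add: field_simps)
  finally have d2: "dist z0 c' = R" using r d by (simp add: dist_norm)
  have uniq: "y = z0" if y: "dist y c \<le> r" "dist y c' \<ge> R" for y
  proof -
    have "dist y c' \<le> dist y c + dist c c'" by (rule dist_triangle)
    then have e1: "dist y c = r" "dist y c' = dist y c + dist c c'"
      using y d by (auto simp: dist_commute)
    have "norm (y - c) *\<^sub>R (c - c') = norm (c - c') *\<^sub>R (y - c)"
      using e1(2) dist_triangle_eq by blast
    then have h: "r *\<^sub>R (c - c') = (R - r) *\<^sub>R (y - c)" using e1 d by (simp add: dist_norm)
    have "(R - r) *\<^sub>R y = (R - r) *\<^sub>R (y - c) + (R - r) *\<^sub>R c" by (simp add: algebra_simps)
    also have "\<dots> = r *\<^sub>R (c - c') + (R - r) *\<^sub>R c" using h by simp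
    finally have yy: "(R - r) *\<^sub>R y = r *\<^sub>R (c - c') + (R - r) *\<^sub>R c" .
    moreover have "(R - r) *\<^sub>R z0 = (R - r) *\<^sub>R c + r *\<^sub>R (c - c')"
    proof -
      have k: "(R - r) * (r/(R-r)) = r" using r by simp
      have "(R - r) *\<^sub>R ((r/(R-r)) *\<^sub>R (c - c')) = r *\<^sub>R (c - c')"
        by (simp only: scaleR_scaleR k)
      then show ?thesis by (simp add: z0_def scaleR_add_right)
    qed
    ultimately have "(R - r) *\<^sub>R y = (R - r) *\<^sub>R z0" by (metis add.commute)
    then show ?thesis using r by simp
  qed
  have ex: "\<exists>!z. z \<in> disk_set (Circ c r) \<inter> disk_set (Circ c' (- R))"
  proof (rule ex1I[of _ z0])
    have "z0 \<in> disk_set (Circ c r)" using d1 r by (simp add: dist_commute)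
    moreover have "z0 \<in> disk_set (Circ c' (- R))" unfolding ds using d2 by simp
    ultimately show "z0 \<in> disk_set (Circ c r) \<inter> disk_set (Circ c' (- R))" by simp
    fix y assume "y \<in> disk_set (Circ c r) \<inter> disk_set (Circ c' (- R))"
    then show "y = z0" using r ds by (intro uniq) (auto simp: dist_commute)
  qed
  have w: "wf_disk (Circ c r)" "wf_disk (Circ c' (-R))" using r by simp_all
  have nh: "\<not> (is_half (Circ c r) \<and> is_half (Circ c' (-R)))" by simp
  show ?thesis unfolding tangent_def if_not_P[OF nh] by (intro conjI w(1) w(2) disj2 ex)
qed




definition Dsk :: "real \<Rightarrow> complex \<Rightarrow> gdisk" where
  "Dsk Bv s = Circ (Complex (- ((Re s)\<^sup>2 - (Im s)\<^sup>2) / (Bv * (Bv + (Re s)\<^sup>2 + (Im s)\<^sup>2)))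
                            (- (2 * Re s * Im s) / (Bv * (Bv + (Re s)\<^sup>2 + (Im s)\<^sup>2))))
                   (1 / (Bv + (Re s)\<^sup>2 + (Im s)\<^sup>2))"

lemma sq_eq_pos:
  fixes x y :: real
  assumes "0 \<le> x" "0 < y" "x\<^sup>2 = y\<^sup>2"
  shows "x = y"
  using assms power2_eq_iff[of x y] by auto

lemma Dsk_curv: "curv (Dsk Bv s) = Bv + (Re s)\<^sup>2 + (Im s)\<^sup>2"
  by (simp add: Dsk_def)

lemma Dsk_neg: "Dsk Bv (- s) = Dsk Bv s"
  by (simp add: Dsk_def)

lemma Dsk_spin:
  assumes B: "Bv > 0"
  shows "is_spin (Circ 0 (- 1 / Bv)) (Dsk Bv s) s"
proof -
  define P where "P = Bv + (Re s)\<^sup>2 + (Im s)\<^sup>2"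
  have P: "P > 0" using B by (simp add: P_def add_pos_nonneg)
  have ce: "Complex (- ((Re s)\<^sup>2 - (Im s)\<^sup>2) / (Bv * P)) (- (2 * Re s * Im s) / (Bv * P))
        = - s\<^sup>2 / complex_of_real (Bv * P)"
    using B P by (simp add: complex_eq_iff power2_eq_square Re_divide Im_divide field_simps)
  have dsk: "Dsk Bv s = Circ (- s\<^sup>2 / complex_of_real (Bv * P)) (1 / P)"
    unfolding Dsk_def P_def[symmetric] ce ..
  have o: "complex_of_real (- 1 / Bv * (1 / P)) = - 1 / complex_of_real (Bv * P)" by simp
  have nz: "complex_of_real (Bv * P) \<noteq> 0" using B P by simp
  show ?thesis unfolding dsk is_spin.simps o using nz by (simp add: field_simps)
qed

lemma Dsk_D0:
  assumes B: "Bv > 0" and s: "s \<noteq> 0"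
  shows "tangent (Circ 0 (- 1 / Bv)) (Dsk Bv s)"
proof -
  define P where "P = Bv + (Re s)\<^sup>2 + (Im s)\<^sup>2"
  have u: "(Re s)\<^sup>2 + (Im s)\<^sup>2 > 0" using s by (simp add: complex_eq_iff sum_power2_gt_zero_iff)
  have P: "P > Bv" using u by (simp add: P_def)
  define c where "c = Complex (- ((Re s)\<^sup>2 - (Im s)\<^sup>2) / (Bv * P)) (- (2 * Re s * Im s) / (Bv * P))"
  have sq: "((Im s)\<^sup>2 - (Re s)\<^sup>2)\<^sup>2 + (2 * Re s * Im s)\<^sup>2 = ((Re s)\<^sup>2 + (Im s)\<^sup>2)\<^sup>2"
    by algebra
  have "(dist c 0)\<^sup>2 = (Re c)\<^sup>2 + (Im c)\<^sup>2" by (simp add: dist_norm cmod_power2)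
  also have "\<dots> = (((Im s)\<^sup>2 - (Re s)\<^sup>2)\<^sup>2 + (2 * Re s * Im s)\<^sup>2) / (Bv * P)\<^sup>2"
    unfolding c_def by (simp add: power_divide add_divide_distrib)
  also have "\<dots> = (((Re s)\<^sup>2 + (Im s)\<^sup>2) / (Bv * P))\<^sup>2" unfolding sq by (simp add: power_divide)
  finally have "(dist c 0)\<^sup>2 = (((Re s)\<^sup>2 + (Im s)\<^sup>2) / (Bv * P))\<^sup>2" .
  moreover have "((Re s)\<^sup>2 + (Im s)\<^sup>2) / (Bv * P) > 0" using B P u by simp
  ultimately have "dist c 0 = ((Re s)\<^sup>2 + (Im s)\<^sup>2) / (Bv * P)" using sq_eq_pos zero_le_dist by blast
  also have "\<dots> = 1 / Bv - 1 / P" using B P by (simp add: P_def field_simps)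
  finally have d: "dist c 0 = 1 / Bv - 1 / P" .
  have "1 / P < 1 / Bv" using B P by (simp add: frac_less2)
  then have "tangent (Circ c (1 / P)) (Circ 0 (- (1 / Bv)))"
    using tan_int[of "1 / P" "1 / Bv" c 0] d P B by simp
  moreover have "Dsk Bv s = Circ c (1 / P)" unfolding Dsk_def P_def c_def ..
  ultimately show ?thesis by (metis tangent_sym minus_divide_left)
qed

lemma key_identity:
  fixes x y x' y' B :: real
  defines "P \<equiv> B + x\<^sup>2 + y\<^sup>2" and "Q \<equiv> B + x'\<^sup>2 + y'\<^sup>2"
  assumes X: "(x * y' - y * x')\<^sup>2 = B\<^sup>2"
  shows "((x\<^sup>2 - y\<^sup>2) * Q - (x'\<^sup>2 - y'\<^sup>2) * P)\<^sup>2 + (2 * x * y * Q - 2 * x' * y' * P)\<^sup>2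
         = B\<^sup>2 * (P + Q)\<^sup>2"
proof -
  have "((x\<^sup>2 - y\<^sup>2) * Q - (x'\<^sup>2 - y'\<^sup>2) * P)\<^sup>2 + (2 * x * y * Q - 2 * x' * y' * P)\<^sup>2
        = B\<^sup>2 * (P - Q)\<^sup>2 + 4 * P * Q * (x * y' - y * x')\<^sup>2"
    unfolding P_def Q_def by algebra
  also have "\<dots> = B\<^sup>2 * (P + Q)\<^sup>2" unfolding X by algebra
  finally show ?thesis .
qed

lemma Dsk_DD:
  assumes B: "Bv > 0" and X: "(Re s * Im t - Im s * Re t)\<^sup>2 = Bv\<^sup>2"
  shows "tangent (Dsk Bv s) (Dsk Bv t)"
proof -
  define x y x' y' where "x = Re s" "y = Im s" "x' = Re t" "y' = Im t"
  define P where "P = Bv + x\<^sup>2 + y\<^sup>2"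
  define Q where "Q = Bv + x'\<^sup>2 + y'\<^sup>2"
  have P: "P > 0" "Q > 0" using B by (simp_all add: P_def Q_def add_pos_nonneg)
  define c where "c = Complex (- (x\<^sup>2 - y\<^sup>2) / (Bv * P)) (- (2 * x * y) / (Bv * P))"
  define c' where "c' = Complex (- (x'\<^sup>2 - y'\<^sup>2) / (Bv * Q)) (- (2 * x' * y') / (Bv * Q))"
  have k: "((x\<^sup>2 - y\<^sup>2) * Q - (x'\<^sup>2 - y'\<^sup>2) * P)\<^sup>2 + (2 * x * y * Q - 2 * x' * y' * P)\<^sup>2
         = Bv\<^sup>2 * (P + Q)\<^sup>2"
    unfolding P_def Q_def by (rule key_identity) (use X in \<open>simp add: x_y_x'_y'_def\<close>)
  have e1: "Re c - Re c' = - (((x\<^sup>2 - y\<^sup>2) * Q - (x'\<^sup>2 - y'\<^sup>2) * P) / (Bv * P * Q))"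
    using B P by (simp add: c_def c'_def field_simps)
  have e2: "Im c - Im c' = - ((2 * x * y * Q - 2 * x' * y' * P) / (Bv * P * Q))"
    using B P by (simp add: c_def c'_def field_simps)
  have "(dist c c')\<^sup>2 = (Re c - Re c')\<^sup>2 + (Im c - Im c')\<^sup>2"
    by (simp add: dist_norm cmod_power2)
  also have "\<dots> = (((x\<^sup>2 - y\<^sup>2) * Q - (x'\<^sup>2 - y'\<^sup>2) * P)\<^sup>2 + (2 * x * y * Q - 2 * x' * y' * P)\<^sup>2)
                   / (Bv * P * Q)\<^sup>2"
    unfolding e1 e2 by (simp add: power_divide add_divide_distrib)
  also have "\<dots> = Bv\<^sup>2 * (P + Q)\<^sup>2 / (Bv * P * Q)\<^sup>2" unfolding k ..
  also have "\<dots> = (1 / P + 1 / Q)\<^sup>2" using B P by (simp add: field_simps power2_eq_square)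
  finally have "(dist c c')\<^sup>2 = (1 / P + 1 / Q)\<^sup>2" .
  moreover have "1 / P + 1 / Q > 0" using P by (intro add_pos_pos) simp_all
  ultimately have d: "dist c c' = 1 / P + 1 / Q" using sq_eq_pos zero_le_dist by blast
  have "tangent (Circ c (1 / P)) (Circ c' (1 / Q))"
    using tan_ext[of "1 / P" "1 / Q" c c'] P d by simp
  moreover have "Dsk Bv s = Circ c (1 / P)" unfolding Dsk_def P_def c_def x_y_x'_y'_def ..
  moreover have "Dsk Bv t = Circ c' (1 / Q)" unfolding Dsk_def Q_def c'_def x_y_x'_y'_def ..
  ultimately show ?thesis by simp
qed

lemma Dsk_inj:
  assumes B: "Bv > 0" and e: "Dsk Bv s = Dsk Bv t"
  shows "s = t \<or> s = - t"
proof -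
  define P where "P = Bv + (Re s)\<^sup>2 + (Im s)\<^sup>2"
  define Q where "Q = Bv + (Re t)\<^sup>2 + (Im t)\<^sup>2"
  have P: "P > 0" "Q > 0" using B by (simp_all add: P_def Q_def add_pos_nonneg)
  have r: "1 / P = 1 / Q" and c1: "(Re s)\<^sup>2 - (Im s)\<^sup>2 = (Re t)\<^sup>2 - (Im t)\<^sup>2 \<or> False"
    and c2: "Re s * Im s = Re t * Im t"
  proof -
    have eq: "1 / P = 1 / Q"
      "- ((Re s)\<^sup>2 - (Im s)\<^sup>2) / (Bv * P) = - ((Re t)\<^sup>2 - (Im t)\<^sup>2) / (Bv * Q)"
      "- (2 * Re s * Im s) / (Bv * P) = - (2 * Re t * Im t) / (Bv * Q)"
      using e by (simp_all add: Dsk_def P_def Q_def complex_eq_iff)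
    then have PQ: "P = Q" using P by (simp add: field_simps)
    show "1 / P = 1 / Q" by (fact eq(1))
    show "(Re s)\<^sup>2 - (Im s)\<^sup>2 = (Re t)\<^sup>2 - (Im t)\<^sup>2 \<or> False"
      using eq(2) B P unfolding PQ by (simp add: field_simps)
    show "Re s * Im s = Re t * Im t"
      using eq(3) B P unfolding PQ by (simp add: field_simps)
  qed
  have "s\<^sup>2 = t\<^sup>2" using c1 c2 by (auto simp: complex_eq_iff power2_eq_square algebra_simps)
  then show ?thesis by (simp add: power2_eq_iff)
qed



lemma vcross_vlin: "vcross (vlin \<alpha> \<beta> a b) (vlin \<gamma> \<delta> a b) = (\<alpha> * \<delta> - \<beta> * \<gamma>) * vcross a b"
  by (cases a; cases b) (simp add: algebra_simps)

lemma cross_cx: "Re (vcomplex v) * Im (vcomplex w) - Im (vcomplex v) * Re (vcomplex w) = of_int (vcross v w)"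
  by (cases v; cases w) simp

lemma vcx_neg: "vcomplex (vlin (- \<alpha>) (- \<beta>) a b) = - vcomplex (vlin \<alpha> \<beta> a b)"
  by (cases a; cases b) (simp add: complex_eq_iff)

lemma vnorm_cx: "(Re (vcomplex v))\<^sup>2 + (Im (vcomplex v))\<^sup>2 = of_int (vnorm2 v)"
  by (cases v) (simp add: vnorm2_def power2_eq_square)

lemma vcx_zero: "vcomplex v = 0 \<longleftrightarrow> v = (0, 0)"
  by (cases v) (simp add: complex_eq_iff)

lemma vlin_10: "vlin 1 0 a b = a" by (cases a; cases b) simp
lemma vlin_01: "vlin 0 1 a b = b" by (cases a; cases b) simp
lemma vnorm_11: "vnorm2 (vlin 1 1 a b) = vnorm2 a + vnorm2 b + 2 * vdot a b"
  by (cases a; cases b) (simp add: vnorm2_def algebra_simps power2_eq_square)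
lemma vnorm_1m1: "vnorm2 (vlin 1 (-1) a b) = vnorm2 a + vnorm2 b - 2 * vdot a b"
  by (cases a; cases b) (simp add: vnorm2_def algebra_simps power2_eq_square)

lemma c_swap23: "(A, B, C, D) \<in> apoll_configs q \<Longrightarrow> (A, C, B, D) \<in> apoll_configs q"
  by (meson apoll_configs.rot apoll_configs.swap)

lemma c_swap34: "(A, B, C, D) \<in> apoll_configs q \<Longrightarrow> (A, B, D, C) \<in> apoll_configs q"
  by (meson apoll_configs.rot apoll_configs.swap)

lemma lt1:
  fixes x y :: int
  assumes "x * y > 0" "\<bar>y\<bar> \<le> \<bar>x\<bar>"
  shows "\<bar>x - y\<bar> < \<bar>x\<bar>"
proof -
  have "(0 < x \<and> 0 < y) \<or> (x < 0 \<and> y < 0)" using assms(1) by (simp add: zero_less_mult_iff)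
  then show ?thesis using assms(2) by arith
qed

lemma lt2:
  fixes x y :: int
  assumes "\<not> x * y > 0" "x \<noteq> 0" "y \<noteq> 0" "\<bar>y\<bar> \<le> \<bar>x\<bar>"
  shows "\<bar>x + y\<bar> < \<bar>x\<bar>"
proof -
  have "x * y \<noteq> 0" using assms(2,3) by simp
  then have "x * y < 0" using assms(1) by linarith
  then have "(0 < x \<and> y < 0) \<or> (x < 0 \<and> 0 < y)" by (simp add: mult_less_0_iff)
  then show ?thesis using assms(4) by arith
qed

lemma meas_lt: "\<bar>x\<bar> < \<bar>y\<bar> \<Longrightarrow> nat \<bar>x\<bar> + nat \<bar>z::int\<bar> < nat \<bar>y\<bar> + nat \<bar>z\<bar>"
  using nat_less_eq_zless[of "\<bar>x\<bar>" "\<bar>y\<bar>"] by simp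

lemma meas_lt2: "\<bar>x\<bar> < \<bar>y\<bar> \<Longrightarrow> nat \<bar>z\<bar> + nat \<bar>x::int\<bar> < nat \<bar>z\<bar> + nat \<bar>y\<bar>"
  using nat_less_eq_zless[of "\<bar>x\<bar>" "\<bar>y\<bar>"] by simp

context
  fixes a b :: "int \<times> int"
  assumes nd: "vcross a b \<noteq> 0"
begin

definition "Bv = real_of_int \<bar>vcross a b\<bar>"
definition "D0 = Circ 0 (- 1 / Bv)"
definition "Dv \<alpha> \<beta> = Dsk Bv (vcomplex (vlin \<alpha> \<beta> a b))"
definition "q0 = (D0, Dv 1 0, Dv 0 1, Dv 1 1)"

lemma Bv_pos: "Bv > 0" using nd by (simp add: Bv_def)

lemma Dv_neg: "Dv (- \<alpha>) (- \<beta>) = Dv \<alpha> \<beta>"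
  by (simp add: Dv_def vcx_neg Dsk_neg)

lemma Dv_curv: "curv (Dv \<alpha> \<beta>) = of_int (\<bar>vcross a b\<bar> + vnorm2 (vlin \<alpha> \<beta> a b))"
  by (simp add: Dv_def Dsk_curv vnorm_cx Bv_def add.assoc)

lemma D0_curv: "curv D0 = of_int (- \<bar>vcross a b\<bar>)"
  using Bv_pos by (simp add: D0_def Bv_def)

lemma tan_vv:
  assumes "\<bar>vcross v w\<bar> = \<bar>vcross a b\<bar>"
  shows "tangent (Dsk Bv (vcomplex v)) (Dsk Bv (vcomplex w))"
proof (rule Dsk_DD[OF Bv_pos])
  have "(vcross v w)\<^sup>2 = (\<bar>vcross a b\<bar>)\<^sup>2" using assms by (metis power2_abs)
  then have "(real_of_int (vcross v w))\<^sup>2 = Bv\<^sup>2" unfolding Bv_def by (metis of_int_power)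
  then show "(Re (vcomplex v) * Im (vcomplex w) - Im (vcomplex v) * Re (vcomplex w))\<^sup>2 = Bv\<^sup>2"
    by (simp add: cross_cx)
qed

lemma tan_Dv: "\<bar>\<alpha> * \<delta> - \<beta> * \<gamma>\<bar> = 1 \<Longrightarrow> tangent (Dv \<alpha> \<beta>) (Dv \<gamma> \<delta>)"
  unfolding Dv_def by (rule tan_vv) (simp add: vcross_vlin abs_mult)

lemma vlin_nz: "(\<alpha>, \<beta>) \<noteq> (0, 0) \<Longrightarrow> vlin \<alpha> \<beta> a b \<noteq> (0, 0)"
proof
  assume ne: "(\<alpha>, \<beta>) \<noteq> (0, 0)" and z: "vlin \<alpha> \<beta> a b = (0, 0)"
  have "vcross (vlin \<alpha> \<beta> a b) (vlin 0 1 a b) = 0" using z by (cases b) (simp add: vlin_01)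
  then have "\<alpha> = 0" using nd by (simp add: vcross_vlin)
  have "vcross (vlin \<alpha> \<beta> a b) (vlin 1 0 a b) = 0" using z by (cases a) (simp add: vlin_10)
  then have "\<beta> = 0" using nd by (simp add: vcross_vlin)
  show False using ne \<open>\<alpha> = 0\<close> \<open>\<beta> = 0\<close> by simp
qed

lemma tan_D0v: "(\<alpha>, \<beta>) \<noteq> (0, 0) \<Longrightarrow> tangent D0 (Dv \<alpha> \<beta>)"
  unfolding D0_def Dv_def using vlin_nz Dsk_D0[OF Bv_pos] by (simp add: vcx_zero)

lemma Dv_ne: "Dv \<alpha> \<beta> = Dv \<gamma> \<delta> \<Longrightarrow> \<alpha> * \<delta> - \<beta> * \<gamma> = 0"
proof -
  assume "Dv \<alpha> \<beta> = Dv \<gamma> \<delta>"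
  then have "vcomplex (vlin \<alpha> \<beta> a b) = vcomplex (vlin \<gamma> \<delta> a b) \<or>
             vcomplex (vlin \<alpha> \<beta> a b) = - vcomplex (vlin \<gamma> \<delta> a b)"
    unfolding Dv_def using Dsk_inj[OF Bv_pos] by blast
  then have "real_of_int (vcross (vlin \<alpha> \<beta> a b) (vlin \<gamma> \<delta> a b)) = 0"
    unfolding cross_cx[symmetric] by (auto simp: algebra_simps)
  then have "vcross (vlin \<alpha> \<beta> a b) (vlin \<gamma> \<delta> a b) = 0" by (simp only: of_int_eq_0_iff)
  then show ?thesis using nd by (simp add: vcross_vlin)
qed

lemma unimod_nz: "\<bar>\<alpha> * \<delta> - \<beta> * \<gamma>\<bar> = (1::int) \<Longrightarrow> (\<alpha>, \<beta>) \<noteq> (0, 0) \<and> (\<gamma>, \<delta>) \<noteq> (0, 0)"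
proof (intro conjI notI)
  assume h: "\<bar>\<alpha> * \<delta> - \<beta> * \<gamma>\<bar> = 1"
  { assume "(\<alpha>, \<beta>) = (0, 0)" then show False using h by simp }
  { assume "(\<gamma>, \<delta>) = (0, 0)" then show False using h by simp }
qed

lemma desc_Dv:
  assumes "\<bar>\<alpha> * \<delta> - \<beta> * \<gamma>\<bar> = 1" "\<bar>\<alpha> * m - \<beta> * l\<bar> = 1" "\<bar>\<gamma> * m - \<delta> * l\<bar> = 1"
  shows "descartes D0 (Dv \<alpha> \<beta>) (Dv \<gamma> \<delta>) (Dv l m)"
  unfolding descartes_def tricycle_def
  using assms tan_Dv tan_D0v unimod_nz by metis

abbreviation "CC \<equiv> apoll_configs q0"

definition "Pr \<alpha> \<beta> \<gamma> \<delta> \<longleftrightarrow> (D0, Dv \<alpha> \<beta>, Dv \<gamma> \<delta>, Dv (\<alpha> + \<gamma>) (\<beta> + \<delta>)) \<in> CC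
                          \<and> (D0, Dv \<alpha> \<beta>, Dv \<gamma> \<delta>, Dv (\<alpha> - \<gamma>) (\<beta> - \<delta>)) \<in> CC"

lemma Pr_sym: "Pr \<alpha> \<beta> \<gamma> \<delta> \<Longrightarrow> Pr \<gamma> \<delta> \<alpha> \<beta>"
proof -
  assume "Pr \<alpha> \<beta> \<gamma> \<delta>"
  then have h1: "(D0, Dv \<alpha> \<beta>, Dv \<gamma> \<delta>, Dv (\<alpha> + \<gamma>) (\<beta> + \<delta>)) \<in> CC"
    and h2: "(D0, Dv \<alpha> \<beta>, Dv \<gamma> \<delta>, Dv (\<alpha> - \<gamma>) (\<beta> - \<delta>)) \<in> CC" by (auto simp: Pr_def)
  have e1: "Dv (\<gamma> + \<alpha>) (\<delta> + \<beta>) = Dv (\<alpha> + \<gamma>) (\<beta> + \<delta>)" by (simp add: add.commute)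
  have e2: "Dv (\<gamma> - \<alpha>) (\<delta> - \<beta>) = Dv (\<alpha> - \<gamma>) (\<beta> - \<delta>)"
    using Dv_neg[of "\<alpha> - \<gamma>" "\<beta> - \<delta>"] by simp
  show ?thesis unfolding Pr_def e1 e2 using c_swap23[OF h1] c_swap23[OF h2] by simp
qed

lemma Pr_neg2: "Pr \<alpha> \<beta> \<gamma> \<delta> \<Longrightarrow> Pr \<alpha> \<beta> (- \<gamma>) (- \<delta>)"
  unfolding Pr_def Dv_neg by auto

lemma Pr_add:
  assumes P: "Pr \<alpha> \<beta> \<gamma> \<delta>" and u: "\<bar>\<alpha> * \<delta> - \<beta> * \<gamma>\<bar> = 1"
  shows "Pr \<alpha> \<beta> (\<gamma> + \<alpha>) (\<delta> + \<beta>)"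
proof -
  have h1: "(D0, Dv \<alpha> \<beta>, Dv (\<alpha> + \<gamma>) (\<beta> + \<delta>), Dv \<gamma> \<delta>) \<in> CC"
    using P c_swap34 by (auto simp: Pr_def)
  have e1: "Dv (\<gamma> + \<alpha>) (\<delta> + \<beta>) = Dv (\<alpha> + \<gamma>) (\<beta> + \<delta>)" by (simp add: add.commute)
  have e2: "Dv (\<alpha> - (\<gamma> + \<alpha>)) (\<beta> - (\<delta> + \<beta>)) = Dv \<gamma> \<delta>"
    using Dv_neg[of \<gamma> \<delta>] by simp
  have d: "descartes D0 (Dv \<alpha> \<beta>) (Dv (\<alpha> + \<gamma>) (\<beta> + \<delta>)) (Dv (\<alpha> + (\<gamma> + \<alpha>)) (\<beta> + (\<delta> + \<beta>)))"
    by (rule desc_Dv) (use u in \<open>simp_all add: algebra_simps abs_minus_commute\<close>)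
  have ne: "Dv (\<alpha> + (\<gamma> + \<alpha>)) (\<beta> + (\<delta> + \<beta>)) \<noteq> Dv \<gamma> \<delta>"
  proof
    assume "Dv (\<alpha> + (\<gamma> + \<alpha>)) (\<beta> + (\<delta> + \<beta>)) = Dv \<gamma> \<delta>"
    then have "(\<alpha> + (\<gamma> + \<alpha>)) * \<delta> - (\<beta> + (\<delta> + \<beta>)) * \<gamma> = 0" by (rule Dv_ne)
    then have "2 * (\<alpha> * \<delta> - \<beta> * \<gamma>) = 0" by (simp add: algebra_simps)
    then show False using u by simp
  qed
  have h3: "(D0, Dv \<alpha> \<beta>, Dv (\<alpha> + \<gamma>) (\<beta> + \<delta>), Dv (\<alpha> + (\<gamma> + \<alpha>)) (\<beta> + (\<delta> + \<beta>))) \<in> CC"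
    by (rule apoll_configs.flip[OF h1 d ne])
  show ?thesis unfolding Pr_def e1 e2 using h1 h3 by simp
qed

lemma Pr_base: "Pr 1 0 0 1"
proof -
  have h: "(D0, Dv 1 0, Dv 0 1, Dv 1 1) \<in> CC" unfolding q0_def[symmetric] by (rule apoll_configs.start)
  have d: "descartes D0 (Dv 1 0) (Dv 0 1) (Dv 1 (-1))" by (rule desc_Dv) simp_all
  have ne: "Dv 1 (-1) \<noteq> Dv 1 1" using Dv_ne[of 1 "-1" 1 1] by auto
  have "(D0, Dv 1 0, Dv 0 1, Dv 1 (-1)) \<in> CC" by (rule apoll_configs.flip[OF h d ne])
  then show ?thesis using h by (simp add: Pr_def)
qed

lemma Pr_neg1: "Pr \<alpha> \<beta> \<gamma> \<delta> \<Longrightarrow> Pr (- \<alpha>) (- \<beta>) \<gamma> \<delta>"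
  by (rule Pr_sym[OF Pr_neg2[OF Pr_sym]])

lemma Pr_sub: "Pr \<alpha> \<beta> \<gamma> \<delta> \<Longrightarrow> \<bar>\<alpha> * \<delta> - \<beta> * \<gamma>\<bar> = 1 \<Longrightarrow> Pr \<alpha> \<beta> (\<gamma> - \<alpha>) (\<delta> - \<beta>)"
proof -
  assume P: "Pr \<alpha> \<beta> \<gamma> \<delta>" and u: "\<bar>\<alpha> * \<delta> - \<beta> * \<gamma>\<bar> = 1"
  have "Pr \<alpha> \<beta> (- \<gamma>) (- \<delta>)" using P by (rule Pr_neg2)
  moreover have "\<bar>\<alpha> * (- \<delta>) - \<beta> * (- \<gamma>)\<bar> = 1" using u by (simp add: abs_minus_commute)
  ultimately have "Pr \<alpha> \<beta> (- \<gamma> + \<alpha>) (- \<delta> + \<beta>)" by (rule Pr_add)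
  then have "Pr \<alpha> \<beta> (- (- \<gamma> + \<alpha>)) (- (- \<delta> + \<beta>))" by (rule Pr_neg2)
  then show ?thesis by simp
qed

lemma Pr_addl: "Pr \<alpha> \<beta> \<gamma> \<delta> \<Longrightarrow> \<bar>\<alpha> * \<delta> - \<beta> * \<gamma>\<bar> = 1 \<Longrightarrow> Pr (\<alpha> + \<gamma>) (\<beta> + \<delta>) \<gamma> \<delta>"
proof -
  assume P: "Pr \<alpha> \<beta> \<gamma> \<delta>" and u: "\<bar>\<alpha> * \<delta> - \<beta> * \<gamma>\<bar> = 1"
  have "\<bar>\<gamma> * \<beta> - \<delta> * \<alpha>\<bar> = 1" using u by (simp add: abs_minus_commute algebra_simps)
  then have "Pr \<gamma> \<delta> (\<alpha> + \<gamma>) (\<beta> + \<delta>)" using Pr_add[OF Pr_sym[OF P]] by simp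
  then show ?thesis by (rule Pr_sym)
qed

lemma Pr_subl: "Pr \<alpha> \<beta> \<gamma> \<delta> \<Longrightarrow> \<bar>\<alpha> * \<delta> - \<beta> * \<gamma>\<bar> = 1 \<Longrightarrow> Pr (\<alpha> - \<gamma>) (\<beta> - \<delta>) \<gamma> \<delta>"
proof -
  assume P: "Pr \<alpha> \<beta> \<gamma> \<delta>" and u: "\<bar>\<alpha> * \<delta> - \<beta> * \<gamma>\<bar> = 1"
  have "\<bar>\<gamma> * \<beta> - \<delta> * \<alpha>\<bar> = 1" using u by (simp add: abs_minus_commute algebra_simps)
  then have "Pr \<gamma> \<delta> (\<alpha> - \<gamma>) (\<beta> - \<delta>)" using Pr_sub[OF Pr_sym[OF P]] by simp
  then show ?thesis by (rule Pr_sym)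
qed

lemma Pr_col: "Pr 1 \<beta> 0 1"
proof (induction \<beta> rule: int_induct[where k = 0])
  case base then show ?case using Pr_base by simp
next
  case (step1 i)
  then have "Pr 1 (i + 1) 0 1" using Pr_addl[of 1 i 0 1] by simp
  then show ?case by simp
next
  case (step2 i)
  then have "Pr 1 (i - 1) 0 1" using Pr_subl[of 1 i 0 1] by simp
  then show ?case by simp
qed

lemma Pr_gamma0: "\<bar>\<alpha> * \<delta>\<bar> = 1 \<Longrightarrow> Pr \<alpha> \<beta> 0 \<delta>"
proof -
  assume h: "\<bar>\<alpha> * \<delta>\<bar> = 1"
  have "\<bar>\<alpha>\<bar> = 1" using abs_zmult_eq_1[OF h] .
  moreover have "\<bar>\<delta>\<bar> = 1" using abs_zmult_eq_1[of \<delta> \<alpha>] h by (simp add: mult.commute)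
  ultimately have a: "\<alpha> = 1 \<or> \<alpha> = -1" and d: "\<delta> = 1 \<or> \<delta> = -1" by arith+
  have p1: "Pr 1 \<beta>' 0 \<delta>" for \<beta>'
    using d Pr_col[of \<beta>'] Pr_neg2[of 1 \<beta>' 0 1] by auto
  show ?thesis
    using a p1[of \<beta>] p1[of "-\<beta>"] Pr_neg1[of 1 "-\<beta>" 0 \<delta>] by auto
qed

lemma Pr_all_aux:
  "\<forall>\<alpha> \<beta> \<gamma> \<delta>. nat \<bar>\<alpha>\<bar> + nat \<bar>\<gamma>\<bar> = n \<longrightarrow> \<bar>\<alpha> * \<delta> - \<beta> * \<gamma>\<bar> = 1 \<longrightarrow> Pr \<alpha> \<beta> \<gamma> \<delta>"
proof (induction n rule: less_induct)
  case (less n)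
  show ?case
  proof (intro allI impI)
    fix \<alpha> \<beta> \<gamma> \<delta> :: int
    assume n: "nat \<bar>\<alpha>\<bar> + nat \<bar>\<gamma>\<bar> = n" and u: "\<bar>\<alpha> * \<delta> - \<beta> * \<gamma>\<bar> = 1"
    show "Pr \<alpha> \<beta> \<gamma> \<delta>"
    proof (cases "\<gamma> = 0")
      case True then show ?thesis using u Pr_gamma0 by simp
    next
      case g: False
      show ?thesis
      proof (cases "\<alpha> = 0")
        case True
        then have "\<bar>\<gamma> * \<beta>\<bar> = 1" using u by (simp add: abs_minus_commute mult.commute)
        then have "Pr \<gamma> \<delta> 0 \<beta>" by (rule Pr_gamma0)
        then show ?thesis using True by (simp add: Pr_sym)
      next
        case a: False
        show ?thesis
        proof (cases "\<bar>\<gamma>\<bar> \<le> \<bar>\<alpha>\<bar>")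
          case le: True
          show ?thesis
          proof (cases "\<alpha> * \<gamma> > 0")
            case True
            then have lt: "\<bar>\<alpha> - \<gamma>\<bar> < \<bar>\<alpha>\<bar>" using le by (rule lt1)
            have u': "\<bar>(\<alpha> - \<gamma>) * \<delta> - (\<beta> - \<delta>) * \<gamma>\<bar> = 1" using u by (simp add: algebra_simps)
            have m: "nat \<bar>\<alpha> - \<gamma>\<bar> + nat \<bar>\<gamma>\<bar> < n" unfolding n[symmetric] by (rule meas_lt[OF lt])
            have "Pr (\<alpha> - \<gamma>) (\<beta> - \<delta>) \<gamma> \<delta>"
              using less.IH[OF m, rule_format, OF refl u'] .
            then have "Pr (\<alpha> - \<gamma> + \<gamma>) (\<beta> - \<delta> + \<delta>) \<gamma> \<delta>" using Pr_addl u' by blast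
            then show ?thesis by simp
          next
            case False
            then have lt: "\<bar>\<alpha> + \<gamma>\<bar> < \<bar>\<alpha>\<bar>" using lt2 le g a by blast
            have u': "\<bar>(\<alpha> + \<gamma>) * \<delta> - (\<beta> + \<delta>) * \<gamma>\<bar> = 1" using u by (simp add: algebra_simps)
            have m: "nat \<bar>\<alpha> + \<gamma>\<bar> + nat \<bar>\<gamma>\<bar> < n" unfolding n[symmetric] by (rule meas_lt[OF lt])
            have "Pr (\<alpha> + \<gamma>) (\<beta> + \<delta>) \<gamma> \<delta>"
              using less.IH[OF m, rule_format, OF refl u'] .
            then have "Pr (\<alpha> + \<gamma> - \<gamma>) (\<beta> + \<delta> - \<delta>) \<gamma> \<delta>" using Pr_subl u' by blast
            then show ?thesis by simp
          qed
        next
          case gt: False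
          show ?thesis
          proof (cases "\<alpha> * \<gamma> > 0")
            case True
            then have "\<gamma> * \<alpha> > 0" by (simp add: mult.commute)
            then have lt: "\<bar>\<gamma> - \<alpha>\<bar> < \<bar>\<gamma>\<bar>" using gt by (intro lt1) simp_all
            have u': "\<bar>\<alpha> * (\<delta> - \<beta>) - \<beta> * (\<gamma> - \<alpha>)\<bar> = 1" using u by (simp add: algebra_simps)
            have m: "nat \<bar>\<alpha>\<bar> + nat \<bar>\<gamma> - \<alpha>\<bar> < n" unfolding n[symmetric] by (rule meas_lt2[OF lt])
            have "Pr \<alpha> \<beta> (\<gamma> - \<alpha>) (\<delta> - \<beta>)"
              using less.IH[OF m, rule_format, OF refl u'] .
            then have "Pr \<alpha> \<beta> (\<gamma> - \<alpha> + \<alpha>) (\<delta> - \<beta> + \<beta>)" using Pr_add u' by blast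
            then show ?thesis by simp
          next
            case False
            then have "\<not> \<gamma> * \<alpha> > 0" by (simp add: mult.commute)
            then have lt: "\<bar>\<gamma> + \<alpha>\<bar> < \<bar>\<gamma>\<bar>" using gt g a by (intro lt2) simp_all
            have u': "\<bar>\<alpha> * (\<delta> + \<beta>) - \<beta> * (\<gamma> + \<alpha>)\<bar> = 1" using u by (simp add: algebra_simps)
            have m: "nat \<bar>\<alpha>\<bar> + nat \<bar>\<gamma> + \<alpha>\<bar> < n" unfolding n[symmetric] by (rule meas_lt2[OF lt])
            have "Pr \<alpha> \<beta> (\<gamma> + \<alpha>) (\<delta> + \<beta>)"
              using less.IH[OF m, rule_format, OF refl u'] .
            then have "Pr \<alpha> \<beta> (\<gamma> + \<alpha> - \<alpha>) (\<delta> + \<beta> - \<beta>)" using Pr_sub u' by blast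
            then show ?thesis by simp
          qed
        qed
      qed
    qed
  qed
qed

lemma Pr_all: "\<bar>\<alpha> * \<delta> - \<beta> * \<gamma>\<bar> = 1 \<Longrightarrow> Pr \<alpha> \<beta> \<gamma> \<delta>"
  using Pr_all_aux by blast

end



context
  fixes a b :: "int \<times> int"
  assumes nd: "vcross a b \<noteq> 0"
begin

lemma in_pack: "coprime \<alpha> \<beta> \<Longrightarrow> Dv a b \<alpha> \<beta> \<in> apollonian_packing (q0 a b)"
proof -
  assume cp: "coprime \<alpha> \<beta>"
  obtain u v where uv: "u * \<alpha> + v * \<beta> = gcd \<alpha> \<beta>" using bezout_int by blast
  have "gcd \<alpha> \<beta> = 1" using cp by (simp add: coprime_iff_gcd_eq_1)
  then have "\<bar>\<alpha> * u - \<beta> * (- v)\<bar> = 1" using uv by (simp add: algebra_simps)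
  then have "Pr a b \<alpha> \<beta> (- v) u" by (rule Pr_all[OF nd])
  then have "(D0 a b, Dv a b \<alpha> \<beta>, Dv a b (- v) u, Dv a b (\<alpha> + - v) (\<beta> + u)) \<in> apoll_configs (q0 a b)"
    by (simp add: Pr_def[OF nd])
  then show ?thesis unfolding apollonian_packing_def by blast
qed

lemma cop_nz: "coprime \<alpha> \<beta> \<Longrightarrow> (\<alpha>, \<beta>) \<noteq> ((0::int), 0)"
  by auto

lemma main:
  shows "\<exists>D0 D1 D2 D3 D4.
     descartes D0 D1 D2 D3 \<and> everted D0 D1 D2 D3 \<and>
     curv D0 = of_int (- \<bar>vcross a b\<bar>) \<and>
     curv D1 = of_int (\<bar>vcross a b\<bar> + vnorm2 a) \<and>
     curv D2 = of_int (\<bar>vcross a b\<bar> + vnorm2 b) \<and>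
     curv D3 = of_int (\<bar>vcross a b\<bar> + vnorm2 a + vnorm2 b + 2 * vdot a b) \<and>
     descartes D0 D1 D2 D4 \<and> everted D0 D1 D2 D4 \<and>
     curv D4 = of_int (\<bar>vcross a b\<bar> + vnorm2 a + vnorm2 b - 2 * vdot a b) \<and>
     is_spin D0 D1 (vcomplex a) \<and> is_spin D0 D2 (vcomplex b) \<and>
     integral_packing (apollonian_packing (D0, D1, D2, D3)) \<and>
     (\<exists>f :: int \<Rightarrow> int \<Rightarrow> gdisk.
        (\<forall>\<alpha> \<beta>. coprime \<alpha> \<beta> \<longrightarrow>
            f \<alpha> \<beta> \<in> apollonian_packing (D0, D1, D2, D3) \<and> tangent D0 (f \<alpha> \<beta>) \<and>
            curv (f \<alpha> \<beta>) = of_int (\<bar>vcross a b\<bar> + vnorm2 (vlin \<alpha> \<beta> a b))) \<and>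
        (\<forall>\<alpha> \<beta> \<gamma> \<delta>. coprime \<alpha> \<beta> \<longrightarrow> coprime \<gamma> \<delta> \<longrightarrow>
            \<bar>vcross (vlin \<alpha> \<beta> a b) (vlin \<gamma> \<delta> a b)\<bar> = \<bar>vcross a b\<bar> \<longrightarrow>
            tricycle D0 (f \<alpha> \<beta>) (f \<gamma> \<delta>)))"
proof -
  let ?D0 = "D0 a b" and ?Dv = "Dv a b"
  have d3: "descartes ?D0 (?Dv 1 0) (?Dv 0 1) (?Dv 1 1)" by (rule desc_Dv[OF nd]) simp_all
  have d4: "descartes ?D0 (?Dv 1 0) (?Dv 0 1) (?Dv 1 (-1))" by (rule desc_Dv[OF nd]) simp_all
  have c0: "curv ?D0 = of_int (- \<bar>vcross a b\<bar>)" by (rule D0_curv[OF nd])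
  have neg: "curv ?D0 \<le> 0" unfolding c0 by simp
  have e3: "everted ?D0 (?Dv 1 0) (?Dv 0 1) (?Dv 1 1)" using d3 neg by (simp add: everted_def)
  have e4: "everted ?D0 (?Dv 1 0) (?Dv 0 1) (?Dv 1 (-1))" using d4 neg by (simp add: everted_def)
  have c1: "curv (?Dv 1 0) = of_int (\<bar>vcross a b\<bar> + vnorm2 a)" by (simp add: Dv_curv[OF nd] vlin_10)
  have c2: "curv (?Dv 0 1) = of_int (\<bar>vcross a b\<bar> + vnorm2 b)" by (simp add: Dv_curv[OF nd] vlin_01)
  have c3: "curv (?Dv 1 1) = of_int (\<bar>vcross a b\<bar> + vnorm2 a + vnorm2 b + 2 * vdot a b)"
    by (simp add: Dv_curv[OF nd] vnorm_11 add.assoc)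
  have c4: "curv (?Dv 1 (-1)) = of_int (\<bar>vcross a b\<bar> + vnorm2 a + vnorm2 b - 2 * vdot a b)"
    by (simp add: Dv_curv[OF nd] vnorm_1m1 algebra_simps)
  have s1: "is_spin ?D0 (?Dv 1 0) (vcomplex a)"
    unfolding D0_def[OF nd] Dv_def[OF nd] vlin_10 by (rule Dsk_spin[OF Bv_pos[OF nd]])
  have s2: "is_spin ?D0 (?Dv 0 1) (vcomplex b)"
    unfolding D0_def[OF nd] Dv_def[OF nd] vlin_01 by (rule Dsk_spin[OF Bv_pos[OF nd]])
  have q: "q0 a b = (?D0, ?Dv 1 0, ?Dv 0 1, ?Dv 1 1)" by (rule q0_def[OF nd])
  have "inv4 (q0 a b)" unfolding q inv4_def using d3 c0 c1 c2 c3 by simp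
  then have ip: "integral_packing (apollonian_packing (?D0, ?Dv 1 0, ?Dv 0 1, ?Dv 1 1))"
    unfolding q by (rule integral_from_inv)
  have f1: "\<forall>\<alpha> \<beta>. coprime \<alpha> \<beta> \<longrightarrow>
            ?Dv \<alpha> \<beta> \<in> apollonian_packing (?D0, ?Dv 1 0, ?Dv 0 1, ?Dv 1 1) \<and> tangent ?D0 (?Dv \<alpha> \<beta>) \<and>
            curv (?Dv \<alpha> \<beta>) = of_int (\<bar>vcross a b\<bar> + vnorm2 (vlin \<alpha> \<beta> a b))"
    using in_pack q tan_D0v[OF nd] cop_nz Dv_curv[OF nd] by metis
  have f2: "\<forall>\<alpha> \<beta> \<gamma> \<delta>. coprime \<alpha> \<beta> \<longrightarrow> coprime \<gamma> \<delta> \<longrightarrow>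
            \<bar>vcross (vlin \<alpha> \<beta> a b) (vlin \<gamma> \<delta> a b)\<bar> = \<bar>vcross a b\<bar> \<longrightarrow>
            tricycle ?D0 (?Dv \<alpha> \<beta>) (?Dv \<gamma> \<delta>)"
  proof (intro allI impI)
    fix \<alpha> \<beta> \<gamma> \<delta> :: int
    assume h: "coprime \<alpha> \<beta>" "coprime \<gamma> \<delta>" "\<bar>vcross (vlin \<alpha> \<beta> a b) (vlin \<gamma> \<delta> a b)\<bar> = \<bar>vcross a b\<bar>"
    have "tangent (?Dv \<alpha> \<beta>) (?Dv \<gamma> \<delta>)" unfolding Dv_def[OF nd] by (rule tan_vv[OF nd h(3)])
    then show "tricycle ?D0 (?Dv \<alpha> \<beta>) (?Dv \<gamma> \<delta>)"
      unfolding tricycle_def using tan_D0v[OF nd] cop_nz h(1,2) by blast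
  qed
  show ?thesis
    by (intro exI[of _ ?D0] exI[of _ "?Dv 1 0"] exI[of _ "?Dv 0 1"] exI[of _ "?Dv 1 1"]
          exI[of _ "?Dv 1 (-1)"] exI[of _ ?Dv] conjI d3 d4 e3 e4 c0 c1 c2 c3 c4 s1 s2 ip f1 f2)
qed

end

theorem proposition3p2:
  fixes a b :: "int \<times> int"
  assumes nondeg: "vcross a b \<noteq> 0"
  defines "B \<equiv> \<bar>vcross a b\<bar>"
  shows "\<exists>D0 D1 D2 D3 D4.
     descartes D0 D1 D2 D3 \<and> everted D0 D1 D2 D3 \<and>
     curv D0 = of_int (- B) \<and>
     curv D1 = of_int (B + vnorm2 a) \<and>
     curv D2 = of_int (B + vnorm2 b) \<and>
     curv D3 = of_int (B + vnorm2 a + vnorm2 b + 2 * vdot a b) \<and>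
     descartes D0 D1 D2 D4 \<and> everted D0 D1 D2 D4 \<and>
     curv D4 = of_int (B + vnorm2 a + vnorm2 b - 2 * vdot a b) \<and>
     is_spin D0 D1 (vcomplex a) \<and> is_spin D0 D2 (vcomplex b) \<and>
     integral_packing (apollonian_packing (D0, D1, D2, D3)) \<and>
     (\<exists>f :: int \<Rightarrow> int \<Rightarrow> gdisk.
        (\<forall>\<alpha> \<beta>. coprime \<alpha> \<beta> \<longrightarrow>
            f \<alpha> \<beta> \<in> apollonian_packing (D0, D1, D2, D3) \<and> tangent D0 (f \<alpha> \<beta>) \<and>
            curv (f \<alpha> \<beta>) = of_int (B + vnorm2 (vlin \<alpha> \<beta> a b))) \<and>
        (\<forall>\<alpha> \<beta> \<gamma> \<delta>. coprime \<alpha> \<beta> \<longrightarrow> coprime \<gamma> \<delta> \<longrightarrow>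
            \<bar>vcross (vlin \<alpha> \<beta> a b) (vlin \<gamma> \<delta> a b)\<bar> = B \<longrightarrow>
            tricycle D0 (f \<alpha> \<beta>) (f \<gamma> \<delta>)))"
  unfolding B_def by (rule main[OF nondeg])


end
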